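(* Any two $\alpha$-equivalent closed guarded expressions $\phi,\psi\in\mathcal{E}_0$ are behaviourally equivalent as states of the $T$-coalgebra $(\mathcal{E}_0,\varepsilon)$.
   Context: Standing assumptions: $T:\mathbf{Set}\to\mathbf{Set}$ is a functor; $\mathcal{L}$ is a set of modalities with arities ($L/n$), each $L/n$ assigned an $n$-ary monotone singleton-preserving predicate lifting $[\![L]\!]$ for $T$ (a family $[\![L]\!]_X:(\mathcal{P}X)^n\to\mathcal{P}(TX)$ with $[\![L]\!]_X(f^{-1}[A_1],\dots,f^{-1}[A_n])=(Tf)^{-1}[[\![L]\!]_Y(A_1,\dots,A_n)]$, monotone in each argument, with $|[\![L]\!]_X(\{x_1\},\dots,\{x_n\})|=1$ for all $x_i\in X$). Fix a set $V$ of variables. Expressions: $\phi::=z\mid\nu z.\,\phi\mid L(\phi_1,\dots,\phi_n)$; $\alpha$-equivalence is equality modulo renaming of bound variables. Closed: every variable occurrence bound by a $\nu$; guarded: every variable occurrence separated from its binding $\nu$ by at least one modality; $\mathcal{E}_0$ = closed guarded expressions. The coalgebra $\varepsilon:\mathcal{E}_0\to T\mathcal{E}_0$ is defined by $\varepsilon(L(\phi_1,\dots,\phi_n))=$ the unique element of $[\![L]\!]_{\mathcal{E}_0}(\{\phi_1\},\dots,\{\phi_n\})$ and $\varepsilon(\nu x.\phi)=\varepsilon(\phi[\nu x.\phi/x])$ (well-defined by induction on the number of $\nu$'s not in the scope of a modality). States are behaviourally equivalent if coalgebra morphisms (maps $h$ with $Th\circ\xi=\zeta\circ h$) into a common coalgebra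 identify them. *)

theory Defs
  imports "HOL-Library.FuncSet"
begin

text \<open>A functor on the full subcategory of Set spanned by the subsets of a universe
  type 'u. The action on objects is Tob (with T X a subset of the type 't), the action on
  morphisms is Tmap X Y f for a map f from X to Y (given as a function on 'u, only its
  values on X matter).\<close>

definition set_functor ::
  "('u set \<Rightarrow> 't set) \<Rightarrow> ('u set \<Rightarrow> 'u set \<Rightarrow> ('u \<Rightarrow> 'u) \<Rightarrow> 't \<Rightarrow> 't) \<Rightarrow> bool" where
  "set_functor Tob Tmap \<longleftrightarrow>
     (\<forall>X Y f. f \<in> X \<rightarrow> Y \<longrightarrow> Tmap X Y f \<in> Tob X \<rightarrow> Tob Y) \<and>
     (\<forall>X Y f g. f \<in> X \<rightarrow> Y \<longrightarrow> g \<in> X \<rightarrow> Y \<longrightarrow> (\<forall>x\<in>X. f x = g x) \<longrightarrow>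
        (\<forall>t\<in>Tob X. Tmap X Y f t = Tmap X Y g t)) \<and>
     (\<forall>X. \<forall>t\<in>Tob X. Tmap X X id t = t) \<and>
     (\<forall>X Y Z f g. f \<in> X \<rightarrow> Y \<longrightarrow> g \<in> Y \<rightarrow> Z \<longrightarrow>
        (\<forall>t\<in>Tob X. Tmap X Z (g \<circ> f) t = Tmap Y Z g (Tmap X Y f t)))"

definition pred_lifting ::
  "('u set \<Rightarrow> 't set) \<Rightarrow> ('u set \<Rightarrow> 'u set \<Rightarrow> ('u \<Rightarrow> 'u) \<Rightarrow> 't \<Rightarrow> 't) \<Rightarrow> nat
     \<Rightarrow> ('u set \<Rightarrow> 'u set list \<Rightarrow> 't set) \<Rightarrow> bool" where
  "pred_lifting Tob Tmap n lift \<longleftrightarrow>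
     (\<forall>X As. length As = n \<longrightarrow> (\<forall>A\<in>set As. A \<subseteq> X) \<longrightarrow> lift X As \<subseteq> Tob X) \<and>
     (\<forall>X Y f As. f \<in> X \<rightarrow> Y \<longrightarrow> length As = n \<longrightarrow> (\<forall>A\<in>set As. A \<subseteq> Y) \<longrightarrow>
        lift X (map (\<lambda>A. X \<inter> f -` A) As) = {t \<in> Tob X. Tmap X Y f t \<in> lift Y As}) \<and>
     (\<forall>X As Bs. length As = n \<longrightarrow> length Bs = n \<longrightarrow> (\<forall>B\<in>set Bs. B \<subseteq> X) \<longrightarrow>
        (\<forall>i<n. As ! i \<subseteq> Bs ! i) \<longrightarrow> lift X As \<subseteq> lift X Bs) \<and>
     (\<forall>X xs. length xs = n \<longrightarrow> set xs \<subseteq> X \<longrightarrow> card (lift X (map (\<lambda>x. {x}) xs)) = 1)"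

definition coalgebra :: "('u set \<Rightarrow> 't set) \<Rightarrow> 'u set \<Rightarrow> ('u \<Rightarrow> 't) \<Rightarrow> bool" where
  "coalgebra Tob X \<xi> \<longleftrightarrow> \<xi> \<in> X \<rightarrow> Tob X"

definition coalg_morphism ::
  "('u set \<Rightarrow> 'u set \<Rightarrow> ('u \<Rightarrow> 'u) \<Rightarrow> 't \<Rightarrow> 't) \<Rightarrow> 'u set \<Rightarrow> ('u \<Rightarrow> 't)
     \<Rightarrow> 'u set \<Rightarrow> ('u \<Rightarrow> 't) \<Rightarrow> ('u \<Rightarrow> 'u) \<Rightarrow> bool" where
  "coalg_morphism Tmap X \<xi> Y \<zeta> h \<longleftrightarrow> h \<in> X \<rightarrow> Y \<and> (\<forall>x\<in>X. Tmap X Y h (\<xi> x) = \<zeta> (h x))"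

definition beh_equiv ::
  "('u set \<Rightarrow> 't set) \<Rightarrow> ('u set \<Rightarrow> 'u set \<Rightarrow> ('u \<Rightarrow> 'u) \<Rightarrow> 't \<Rightarrow> 't)
     \<Rightarrow> 'u set \<Rightarrow> ('u \<Rightarrow> 't) \<Rightarrow> 'u \<Rightarrow> 'u set \<Rightarrow> ('u \<Rightarrow> 't) \<Rightarrow> 'u \<Rightarrow> bool" where
  "beh_equiv Tob Tmap X \<xi> x Y \<zeta> y \<longleftrightarrow>
     (\<exists>Z \<gamma> h g. coalgebra Tob Z \<gamma> \<and> coalg_morphism Tmap X \<xi> Z \<gamma> h \<and>
        coalg_morphism Tmap Y \<zeta> Z \<gamma> g \<and> h x = g y)"

datatype ('v, 'm) expr = Var 'v | Nu 'v "('v, 'm) expr" | Mod 'm "('v, 'm) expr list"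

fun wf_expr :: "('m \<Rightarrow> nat) \<Rightarrow> ('v, 'm) expr \<Rightarrow> bool" where
  "wf_expr ar (Var x) = True"
| "wf_expr ar (Nu x \<phi>) = wf_expr ar \<phi>"
| "wf_expr ar (Mod L as) = (length as = ar L \<and> (\<forall>a\<in>set as. wf_expr ar a))"

fun fv :: "('v, 'm) expr \<Rightarrow> 'v set" where
  "fv (Var x) = {x}"
| "fv (Nu x \<phi>) = fv \<phi> - {x}"
| "fv (Mod L as) = (\<Union>a\<in>set as. fv a)"

definition closed :: "('v, 'm) expr \<Rightarrow> bool" where
  "closed \<phi> \<longleftrightarrow> fv \<phi> = {}"

fun ugv :: "('v, 'm) expr \<Rightarrow> 'v set" where
  "ugv (Var x) = {x}"
| "ugv (Nu x \<phi>) = ugv \<phi> - {x}"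
| "ugv (Mod L as) = {}"

fun guarded :: "('v, 'm) expr \<Rightarrow> bool" where
  "guarded (Var x) = True"
| "guarded (Nu x \<phi>) = (guarded \<phi> \<and> x \<notin> ugv \<phi>)"
| "guarded (Mod L as) = (\<forall>a\<in>set as. guarded a)"

definition E0 :: "('m \<Rightarrow> nat) \<Rightarrow> ('v, 'm) expr set" where
  "E0 ar = {\<phi>. wf_expr ar \<phi> \<and> closed \<phi> \<and> guarded \<phi>}"

text \<open>Substitution of an expression s for the free occurrences of x (capture-avoidance is
  not needed since it is only used with closed s).\<close>
fun subst :: "'v \<Rightarrow> ('v, 'm) expr \<Rightarrow> ('v, 'm) expr \<Rightarrow> ('v, 'm) expr" where
  "subst x s (Var y) = (if y = x then s else Var y)"
| "subst x s (Nu y \<phi>) = (if y = x then Nu y \<phi> else Nu y (subst x s \<phi>))"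
| "subst x s (Mod L as) = Mod L (map (subst x s) as)"

text \<open>Alpha-equivalence: equality modulo renaming of bound variables, via an
  environment of corresponding binders (innermost first).\<close>
fun var_corr :: "('v \<times> 'v) list \<Rightarrow> 'v \<Rightarrow> 'v \<Rightarrow> bool" where
  "var_corr [] x y = (x = y)"
| "var_corr ((a, b) # \<Gamma>) x y =
     (if x = a \<or> y = b then x = a \<and> y = b else var_corr \<Gamma> x y)"

inductive alpha_env :: "('v \<times> 'v) list \<Rightarrow> ('v, 'm) expr \<Rightarrow> ('v, 'm) expr \<Rightarrow> bool" where
  "var_corr \<Gamma> x y \<Longrightarrow> alpha_env \<Gamma> (Var x) (Var y)"
| "alpha_env ((x, y) # \<Gamma>) \<phi> \<psi> \<Longrightarrow> alpha_env \<Gamma> (Nu x \<phi>) (Nu y \<psi>)"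
| "list_all2 (alpha_env \<Gamma>) as bs \<Longrightarrow> alpha_env \<Gamma> (Mod L as) (Mod L bs)"

definition alpha_eq :: "('v, 'm) expr \<Rightarrow> ('v, 'm) expr \<Rightarrow> bool" where
  "alpha_eq \<phi> \<psi> \<longleftrightarrow> alpha_env [] \<phi> \<psi>"

inductive unf :: "('v, 'm) expr \<Rightarrow> ('v, 'm) expr \<Rightarrow> bool" where
  "unf (Mod L as) (Mod L as)"
| "unf (subst x (Nu x \<phi>) \<phi>) r \<Longrightarrow> unf (Nu x \<phi>) r"

definition eps ::
  "('m \<Rightarrow> nat) \<Rightarrow> ('m \<Rightarrow> ('v, 'm) expr set \<Rightarrow> ('v, 'm) expr set list \<Rightarrow> 't set)
     \<Rightarrow> ('v, 'm) expr \<Rightarrow> 't" where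
  "eps ar lift \<phi> = (THE t. \<exists>L as. unf \<phi> (Mod L as) \<and>
       t \<in> lift L (E0 ar) (map (\<lambda>\<psi>. {\<psi>}) as))"

end

theory Submission imports Defs begin

lemma subst_nofv: "y \<notin> fv \<psi> \<Longrightarrow> subst y t \<psi> = \<psi>"
  by (induction \<psi>) (auto intro: map_idI)

lemma fv_subst: "fv (subst x s \<phi>) \<subseteq> (fv \<phi> - {x}) \<union> fv s"
  by (induction \<phi>) auto

lemma ugv_fv: "ugv \<phi> \<subseteq> fv \<phi>"
  by (induction \<phi>) auto

lemma ugv_subst: "ugv (subst x s \<phi>) \<subseteq> ugv \<phi> \<union> ugv s"
  by (induction \<phi>) auto

lemma guarded_subst: "guarded \<phi> \<Longrightarrow> guarded s \<Longrightarrow> fv s = {} \<Longrightarrow> guarded (subst x s \<phi>)"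
proof (induction \<phi>)
  case (Nu y \<phi>)
  then show ?case using ugv_subst[of x s \<phi>] ugv_fv[of s] by auto
qed auto

lemma wf_subst: "wf_expr ar \<phi> \<Longrightarrow> wf_expr ar s \<Longrightarrow> wf_expr ar (subst x s \<phi>)"
  by (induction \<phi>) auto

lemma E0_unfold: "Nu x \<phi> \<in> E0 ar \<Longrightarrow> subst x (Nu x \<phi>) \<phi> \<in> E0 ar"
  unfolding E0_def closed_def
  using fv_subst[of x "Nu x \<phi>" \<phi>] guarded_subst[of \<phi> "Nu x \<phi>" x] wf_subst[of ar \<phi> "Nu x \<phi>" x]
  by auto

fun nn :: "('v, 'm) expr \<Rightarrow> nat" where
  "nn (Var x) = 0" | "nn (Nu x \<phi>) = Suc (nn \<phi>)" | "nn (Mod L as) = 0"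

lemma nn_subst: "x \<notin> ugv \<phi> \<Longrightarrow> nn (subst x s \<phi>) = nn \<phi>"
  by (induction \<phi>) auto

lemma unf_exists: "\<phi> \<in> E0 ar \<Longrightarrow> \<exists>L as. unf \<phi> (Mod L as)"
proof (induction "nn \<phi>" arbitrary: \<phi> rule: less_induct)
  case less
  show ?case
  proof (cases \<phi>)
    case (Var x)
    then show ?thesis using less.prems by (auto simp: E0_def closed_def)
  next
    case (Nu x \<phi>')
    have "x \<notin> ugv \<phi>'" using less.prems Nu by (auto simp: E0_def)
    then have "nn (subst x (Nu x \<phi>') \<phi>') < nn \<phi>" using Nu by (simp add: nn_subst)
    moreover have "subst x (Nu x \<phi>') \<phi>' \<in> E0 ar" using less.prems Nu by (metis E0_unfold)
    ultimately obtain L as where "unf (subst x (Nu x \<phi>') \<phi>') (Mod L as)"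
      using less.hyps Nu by blast
    then have "unf (Nu x \<phi>') (Mod L as)" by (rule unf.intros(2))
    then show ?thesis using Nu by blast
  next
    case (Mod L as)
    then show ?thesis by (auto intro: unf.intros)
  qed
qed

lemma unf_E0: "unf \<phi> r \<Longrightarrow> \<phi> \<in> E0 ar \<Longrightarrow> r \<in> E0 ar"
proof (induction rule: unf.induct)
  case (1 L as)
  then show ?case .
next
  case (2 x \<phi> r)
  then show ?case by (metis E0_unfold)
qed

lemma unf_det: "unf \<phi> r \<Longrightarrow> unf \<phi> r' \<Longrightarrow> r = r'"
proof (induction arbitrary: r' rule: unf.induct)
  case (1 L as)
  from 1 show ?case by (rule unf.cases) simp_all
next
  case (2 x \<phi> r)
  from 2(3) have "unf (subst x (Nu x \<phi>) \<phi>) r'" by (rule unf.cases) simp_all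
  then show ?case by (rule 2(2))
qed

lemma fv_corr: "alpha_env \<Gamma> \<phi> \<psi> \<Longrightarrow> v \<in> fv \<psi> \<Longrightarrow> \<exists>u. var_corr \<Gamma> u v"
proof (induction arbitrary: v rule: alpha_env.induct)
  case (1 \<Gamma> x y)
  then show ?case by auto
next
  case (2 x y \<Gamma> \<phi> \<psi>)
  from 2(3) have v: "v \<in> fv \<psi>" "v \<noteq> y" by auto
  then obtain u where "var_corr ((x, y) # \<Gamma>) u v" using 2(2) by blast
  then show ?case using v by (auto split: if_splits)
next
  case (3 \<Gamma> as bs L)
  then obtain b where "b \<in> set bs" "v \<in> fv b" by auto
  then obtain i where i: "i < length bs" "bs ! i = b" by (auto simp: in_set_conv_nth)
  with 3(1) have "alpha_env \<Gamma> (as ! i) b \<and> (\<forall>v. v \<in> fv b \<longrightarrow> (\<exists>u. var_corr \<Gamma> u v))"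
    by (auto simp: list_all2_conv_all_nth)
  then show ?case using \<open>v \<in> fv b\<close> by blast
qed

lemma fv_corr': "alpha_env \<Gamma> \<phi> \<psi> \<Longrightarrow> u \<in> fv \<phi> \<Longrightarrow> \<exists>v. var_corr \<Gamma> u v"
proof (induction arbitrary: u rule: alpha_env.induct)
  case (1 \<Gamma> x y)
  then show ?case by auto
next
  case (2 x y \<Gamma> \<phi> \<psi>)
  from 2(3) have u: "u \<in> fv \<phi>" "u \<noteq> x" by auto
  then obtain v where "var_corr ((x, y) # \<Gamma>) u v" using 2(2) by blast
  then show ?case using u by (auto split: if_splits)
next
  case (3 \<Gamma> as bs L)
  then obtain b where "b \<in> set as" "u \<in> fv b" by auto
  then obtain i where i: "i < length as" "as ! i = b" by (auto simp: in_set_conv_nth)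
  with 3(1) have "alpha_env \<Gamma> b (bs ! i) \<and> (\<forall>v. v \<in> fv b \<longrightarrow> (\<exists>u. var_corr \<Gamma> v u))"
    by (auto simp: list_all2_conv_all_nth)
  then show ?case using \<open>u \<in> fv b\<close> by blast
qed

lemma alpha_env_change: "alpha_env \<Gamma> s t \<Longrightarrow>
   (\<forall>u v. var_corr \<Gamma> u v \<and> u \<in> fv s \<and> v \<in> fv t \<longrightarrow> var_corr \<Gamma>' u v) \<Longrightarrow> alpha_env \<Gamma>' s t"
proof (induction arbitrary: \<Gamma>' rule: alpha_env.induct)
  case (1 \<Gamma> x y)
  then show ?case by (auto intro: alpha_env.intros)
next
  case (2 x y \<Gamma> \<phi> \<psi>)
  have "alpha_env ((x, y) # \<Gamma>') \<phi> \<psi>"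
  proof (rule 2(2), intro allI impI)
    fix u v assume a: "var_corr ((x, y) # \<Gamma>) u v \<and> u \<in> fv \<phi> \<and> v \<in> fv \<psi>"
    show "var_corr ((x, y) # \<Gamma>') u v"
    proof (cases "u = x \<or> v = y")
      case True
      then show ?thesis using a by (simp split: if_splits)
    next
      case False
      then have "var_corr \<Gamma> u v" "u \<in> fv (Nu x \<phi>)" "v \<in> fv (Nu y \<psi>)" using a by auto
      then have "var_corr \<Gamma>' u v" using 2(3) by blast
      then show ?thesis using False by simp
    qed
  qed
  then show ?case by (rule alpha_env.intros)
next
  case (3 \<Gamma> as bs L)
  have "list_all2 (alpha_env \<Gamma>') as bs"
    unfolding list_all2_conv_all_nth
  proof (intro conjI allI impI)
    show "length as = length bs" using 3(1) by (simp add: list_all2_conv_all_nth)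
    fix i assume i: "i < length as"
    then have ih: "\<And>\<Gamma>'. (\<forall>u v. var_corr \<Gamma> u v \<and> u \<in> fv (as ! i) \<and> v \<in> fv (bs ! i) \<longrightarrow> var_corr \<Gamma>' u v)
         \<Longrightarrow> alpha_env \<Gamma>' (as ! i) (bs ! i)"
      using 3(1) by (simp add: list_all2_conv_all_nth)
    have li: "i < length bs" using i 3(1) by (simp add: list_all2_conv_all_nth)
    show "alpha_env \<Gamma>' (as ! i) (bs ! i)"
    proof (rule ih, intro allI impI)
      fix u v assume a: "var_corr \<Gamma> u v \<and> u \<in> fv (as ! i) \<and> v \<in> fv (bs ! i)"
      then have "u \<in> fv (Mod L as)" "v \<in> fv (Mod L bs)" using i li by auto
      then show "var_corr \<Gamma>' u v" using a 3(2) by blast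
    qed
  qed
  then show ?case by (rule alpha_env.intros)
qed

lemma alpha_subst: "alpha_env \<Gamma> \<phi> \<psi> \<Longrightarrow> (\<forall>u v. var_corr \<Gamma> u v \<longrightarrow> (u = x0 \<longleftrightarrow> v = y0)) \<Longrightarrow>
   (\<forall>\<Delta>. alpha_env \<Delta> s t) \<Longrightarrow> alpha_env \<Gamma> (subst x0 s \<phi>) (subst y0 t \<psi>)"
proof (induction rule: alpha_env.induct)
  case (1 \<Gamma> x y)
  show ?case
  proof (cases "x = x0")
    case True
    then have "y = y0" using 1 by blast
    then show ?thesis using True 1(3) by simp
  next
    case False
    then have "y \<noteq> y0" using 1 by blast
    then show ?thesis using False 1(1) by (simp add: alpha_env.intros(1))
  qed
next
  case (2 x y \<Gamma> \<phi> \<psi>)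
  consider "x = x0" "y = y0" | "x \<noteq> x0" "y \<noteq> y0" | "x = x0" "y \<noteq> y0" | "x \<noteq> x0" "y = y0" by blast
  then show ?case
  proof cases
    case 1
    then show ?thesis using 2(1) by (simp add: alpha_env.intros(2))
  next
    case c: 2
    have cond: "\<forall>u v. var_corr ((x, y) # \<Gamma>) u v \<longrightarrow> (u = x0 \<longleftrightarrow> v = y0)"
    proof (intro allI impI)
      fix u v assume a: "var_corr ((x, y) # \<Gamma>) u v"
      show "(u = x0 \<longleftrightarrow> v = y0)"
      proof (cases "u = x \<or> v = y")
        case True
        then have "u = x" "v = y" using a by (simp_all split: if_splits)
        then show ?thesis using c by simp
      next
        case False
        then have "var_corr \<Gamma> u v" using a by simp
        then show ?thesis using "2.prems"(1) by blast
      qed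
    qed
    have "alpha_env ((x, y) # \<Gamma>) (subst x0 s \<phi>) (subst y0 t \<psi>)"
      by (rule "2.IH"[OF cond "2.prems"(2)])
    then show ?thesis using c by (simp add: alpha_env.intros(2))
  next
    case 3
    have "y0 \<notin> fv \<psi>"
    proof
      assume "y0 \<in> fv \<psi>"
      then obtain p where p: "var_corr ((x, y) # \<Gamma>) p y0" using fv_corr[OF 2(1) \<open>y0 \<in> fv \<psi>\<close>] by blast
      show False
      proof (cases "p = x")
        case True
        then show False using p 3 by simp
      next
        case False
        then have "var_corr \<Gamma> p y0" using p 3 by simp
        then show False using "2.prems"(1) False 3 by blast
      qed
    qed
    then show ?thesis using 3 2(1) by (simp add: subst_nofv alpha_env.intros(2))
  next
    case 4
    have "x0 \<notin> fv \<phi>"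
    proof
      assume "x0 \<in> fv \<phi>"
      then obtain p where p: "var_corr ((x, y) # \<Gamma>) x0 p" using fv_corr'[OF 2(1) \<open>x0 \<in> fv \<phi>\<close>] by blast
      show False
      proof (cases "p = y")
        case True
        then show False using p 4 by simp
      next
        case False
        then have "var_corr \<Gamma> x0 p" using p 4 by simp
        then show False using "2.prems"(1) False 4 by blast
      qed
    qed
    then show ?thesis using 4 2(1) by (simp add: subst_nofv alpha_env.intros(2))
  qed
next
  case (3 \<Gamma> as bs L)
  have "list_all2 (alpha_env \<Gamma>) (map (subst x0 s) as) (map (subst y0 t) bs)"
    unfolding list_all2_conv_all_nth
  proof (intro conjI allI impI)
    show "length (map (subst x0 s) as) = length (map (subst y0 t) bs)"
      using 3(1) by (simp add: list_all2_conv_all_nth)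
    fix i assume i: "i < length (map (subst x0 s) as)"
    have li: "i < length bs" using i 3(1) by (simp add: list_all2_conv_all_nth)
    have "alpha_env \<Gamma> (subst x0 s (as ! i)) (subst y0 t (bs ! i))"
      using 3(1) i 3(2) 3(3) by (simp add: list_all2_conv_all_nth)
    then show "alpha_env \<Gamma> (map (subst x0 s) as ! i) (map (subst y0 t) bs ! i)"
      using i li by simp
  qed
  then show ?case by (simp add: alpha_env.intros(3))
qed

inductive_cases alpha_NuE: "alpha_env \<Gamma> (Nu x \<phi>) b"
inductive_cases alpha_ModE: "alpha_env \<Gamma> (Mod L as) b"

lemma alpha_closed_any: "alpha_env \<Gamma> s t \<Longrightarrow> fv s = {} \<Longrightarrow> alpha_env \<Delta> s t"
  by (erule alpha_env_change) simp

lemma alpha_eq_alt: "alpha_eq = alpha_env []"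
  by (rule ext, rule ext) (simp add: alpha_eq_def)

lemma alpha_unfold:
  assumes "alpha_eq (Nu x \<phi>) (Nu y \<psi>)" "closed (Nu x \<phi>)" "closed (Nu y \<psi>)"
  shows "alpha_eq (subst x (Nu x \<phi>) \<phi>) (subst y (Nu y \<psi>) \<psi>)"
proof -
  from assms(1) have a: "alpha_env [(x, y)] \<phi> \<psi>" unfolding alpha_eq_def
    by (rule alpha_NuE) simp
  have cond: "\<forall>u v. var_corr [(x, y)] u v \<longrightarrow> (u = x \<longleftrightarrow> v = y)"
  proof (intro allI impI)
    fix u v assume h: "var_corr [(x, y)] u v"
    have e: "var_corr [(x, y)] u v = (if u = x \<or> v = y then u = x \<and> v = y else u = v)"
      by (simp only: var_corr.simps)
    show "u = x \<longleftrightarrow> v = y"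
    proof (cases "u = x \<or> v = y")
      case True
      then show ?thesis using h e by presburger
    next
      case False
      then show ?thesis by blast
    qed
  qed
  have any: "\<forall>\<Delta>. alpha_env \<Delta> (Nu x \<phi>) (Nu y \<psi>)"
  proof
    fix \<Delta>
    show "alpha_env \<Delta> (Nu x \<phi>) (Nu y \<psi>)"
      using assms(1,2) unfolding alpha_eq_def closed_def by (rule alpha_closed_any)
  qed
  have b: "alpha_env [(x, y)] (subst x (Nu x \<phi>) \<phi>) (subst y (Nu y \<psi>) \<psi>)"
    by (rule alpha_subst[OF a cond any])
  have "fv (subst x (Nu x \<phi>) \<phi>) = {}"
    using fv_subst[of x "Nu x \<phi>" \<phi>] assms(2) unfolding closed_def by auto
  then show ?thesis unfolding alpha_eq_def by (rule alpha_closed_any[OF b])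
qed

lemma closed_unfold: "closed (Nu x \<phi>) \<Longrightarrow> closed (subst x (Nu x \<phi>) \<phi>)"
  using fv_subst[of x "Nu x \<phi>" \<phi>] unfolding closed_def by auto

lemma alpha_unf: "unf a r \<Longrightarrow> alpha_eq a b \<Longrightarrow> closed a \<Longrightarrow> closed b \<Longrightarrow>
    \<exists>r'. unf b r' \<and> alpha_eq r r'"
proof (induction arbitrary: b rule: unf.induct)
  case (1 L as)
  from "1.prems"(1) obtain bs where bb: "b = Mod L bs" unfolding alpha_eq_def
    by (rule alpha_ModE) simp
  have "unf b b" unfolding bb by (rule unf.intros(1))
  then show ?case using "1.prems"(1) by blast
next
  case (2 x \<phi> r)
  from "2.prems"(1) obtain y \<psi> where b: "b = Nu y \<psi>" unfolding alpha_eq_def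
    by (rule alpha_NuE) simp
  have ae: "alpha_eq (Nu x \<phi>) (Nu y \<psi>)" "closed (Nu x \<phi>)" "closed (Nu y \<psi>)"
    using "2.prems" unfolding b by simp_all
  have "alpha_eq (subst x (Nu x \<phi>) \<phi>) (subst y (Nu y \<psi>) \<psi>)"
    using ae by (rule alpha_unfold)
  moreover have "closed (subst x (Nu x \<phi>) \<phi>)" using ae(2) by (rule closed_unfold)
  moreover have "closed (subst y (Nu y \<psi>) \<psi>)" using ae(3) by (rule closed_unfold)
  ultimately have "\<exists>r'. unf (subst y (Nu y \<psi>) \<psi>) r' \<and> alpha_eq r r'"
    by (rule "2.IH")
  then obtain r' where r': "unf (subst y (Nu y \<psi>) \<psi>) r'" "alpha_eq r r'" by blast
  have "unf (Nu y \<psi>) r'" using r'(1) by (rule unf.intros(2))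
  then show ?case using r'(2) b by blast
qed

lemma Mod_E0: "Mod L as \<in> E0 ar \<Longrightarrow> length as = ar L \<and> set as \<subseteq> E0 ar"
  unfolding E0_def closed_def by auto

lemma alpha_step:
  assumes "alpha_eq a b" "a \<in> E0 ar" "b \<in> E0 ar" "unf a (Mod L as)"
  shows "\<exists>bs. unf b (Mod L bs) \<and> list_all2 alpha_eq as bs"
proof -
  obtain r' where r': "unf b r'" "alpha_eq (Mod L as) r'"
    using alpha_unf[OF assms(4,1)] assms(2,3) unfolding E0_def by blast
  from r'(2) obtain bs where "r' = Mod L bs" "list_all2 (alpha_env []) as bs"
    unfolding alpha_eq_def by (rule alpha_ModE) simp
  then show ?thesis using r'(1) unfolding alpha_eq_alt by blast
qed

definition Srel :: "('m \<Rightarrow> nat) \<Rightarrow> ('v, 'm) expr \<Rightarrow> ('v, 'm) expr \<Rightarrow> bool" where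
  "Srel ar a b \<longleftrightarrow> a \<in> E0 ar \<and> b \<in> E0 ar \<and> (alpha_eq a b \<or> alpha_eq b a)"

lemma S_step:
  assumes "Srel ar b c" "unf b (Mod L bs)"
  shows "\<exists>cs. unf c (Mod L cs) \<and> list_all2 (Srel ar) bs cs"
proof -
  have bE: "b \<in> E0 ar" and cE: "c \<in> E0 ar" using assms(1) unfolding Srel_def by blast+
  have bsE: "set bs \<subseteq> E0 ar" using Mod_E0[OF unf_E0[OF assms(2) bE]] by blast
  obtain cs where cs: "unf c (Mod L cs)" "list_all2 (\<lambda>x y. alpha_eq x y \<or> alpha_eq y x) bs cs"
  proof (cases "alpha_eq b c")
    case True
    then obtain cs where cs1: "unf c (Mod L cs)" "list_all2 alpha_eq bs cs"
      using alpha_step[OF True bE cE assms(2)] by blast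
    have "list_all2 (\<lambda>x y. alpha_eq x y \<or> alpha_eq y x) bs cs"
      using cs1(2) by (rule list_all2_mono) blast
    then show ?thesis using that cs1(1) by blast
  next
    case False
    then have ab: "alpha_eq c b" using assms(1) unfolding Srel_def by blast
    obtain L' cs where u: "unf c (Mod L' cs)" using unf_exists[OF cE] by blast
    obtain bs' where bs': "unf b (Mod L' bs')" "list_all2 alpha_eq cs bs'"
      using alpha_step[OF ab cE bE u] by blast
    have "Mod L' bs' = Mod L bs" using unf_det[OF bs'(1) assms(2)] .
    then have e: "L' = L" "bs' = bs" by simp_all
    have "list_all2 (\<lambda>x y. alpha_eq x y \<or> alpha_eq y x) bs cs"
      using bs'(2) unfolding e list_all2_conv_all_nth by simp
    then show ?thesis using that u unfolding e by blast
  qed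
  have csE: "set cs \<subseteq> E0 ar" using Mod_E0[OF unf_E0[OF cs(1) cE]] by blast
  have "list_all2 (Srel ar) bs cs"
    unfolding list_all2_conv_all_nth
  proof (intro conjI allI impI)
    show "length bs = length cs" using cs(2) by (rule list_all2_lengthD)
    fix i assume i: "i < length bs"
    then have i2: "i < length cs" using list_all2_lengthD[OF cs(2)] by simp
    have "bs ! i \<in> E0 ar" using bsE nth_mem[OF i] by blast
    moreover have "cs ! i \<in> E0 ar" using csE nth_mem[OF i2] by blast
    moreover have "alpha_eq (bs ! i) (cs ! i) \<or> alpha_eq (cs ! i) (bs ! i)"
      using cs(2) i by (simp add: list_all2_conv_all_nth)
    ultimately show "Srel ar (bs ! i) (cs ! i)" unfolding Srel_def by blast
  qed
  then show ?thesis using cs(1) by blast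
qed

lemma R_step:
  assumes "(Srel ar)\<^sup>*\<^sup>* a b" "unf a (Mod L as)"
  shows "\<exists>bs. unf b (Mod L bs) \<and> list_all2 ((Srel ar)\<^sup>*\<^sup>*) as bs"
  using assms(1)
proof (induction rule: rtranclp_induct)
  case base
  then show ?case using assms(2) by (auto intro: list_all2_refl)
next
  case (step b c)
  then obtain bs where bs: "unf b (Mod L bs)" "list_all2 ((Srel ar)\<^sup>*\<^sup>*) as bs" by blast
  obtain cs where cs: "unf c (Mod L cs)" "list_all2 (Srel ar) bs cs" using S_step[OF step(2) bs(1)] by blast
  have "list_all2 ((Srel ar)\<^sup>*\<^sup>*) as cs"
    using list_all2_trans[OF _ bs(2) cs(2), of "(Srel ar)\<^sup>*\<^sup>*"] by auto
  then show ?case using cs(1) by blast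
qed

lemma R_sym: "(Srel ar)\<^sup>*\<^sup>* a b \<Longrightarrow> (Srel ar)\<^sup>*\<^sup>* b a"
proof (induction rule: rtranclp_induct)
  case base
  then show ?case by simp
next
  case (step b c)
  have "Srel ar c b" using step(2) by (auto simp: Srel_def)
  then show ?case using step(3) by (rule converse_rtranclp_into_rtranclp)
qed

lemma R_E0: "(Srel ar)\<^sup>*\<^sup>* a b \<Longrightarrow> a \<in> E0 ar \<Longrightarrow> b \<in> E0 ar"
  by (induction rule: rtranclp_induct) (auto simp: Srel_def)

definition canon :: "('m \<Rightarrow> nat) \<Rightarrow> ('v, 'm) expr \<Rightarrow> ('v, 'm) expr" where
  "canon ar a = (SOME b. (Srel ar)\<^sup>*\<^sup>* a b)"

lemma canon_R: "(Srel ar)\<^sup>*\<^sup>* a (canon ar a)"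
  unfolding canon_def by (rule someI[of _ a]) simp

lemma canon_eq: "(Srel ar)\<^sup>*\<^sup>* a b \<Longrightarrow> canon ar a = canon ar b"
proof -
  assume ab: "(Srel ar)\<^sup>*\<^sup>* a b"
  have "(Srel ar)\<^sup>*\<^sup>* a = (Srel ar)\<^sup>*\<^sup>* b"
  proof (rule ext, rule iffI)
    fix z assume "(Srel ar)\<^sup>*\<^sup>* a z"
    then show "(Srel ar)\<^sup>*\<^sup>* b z" using R_sym[OF ab] by (rule rtranclp_trans[rotated])
  next
    fix z assume "(Srel ar)\<^sup>*\<^sup>* b z"
    then show "(Srel ar)\<^sup>*\<^sup>* a z" using ab by (rule rtranclp_trans[rotated])
  qed
  then show ?thesis unfolding canon_def by simp
qed

lemma canon_map: "list_all2 ((Srel ar)\<^sup>*\<^sup>*) as bs \<Longrightarrow> map (canon ar) as = map (canon ar) bs"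
  by (induction rule: list_all2_induct) (auto intro: canon_eq)

lemma pl1: assumes "pred_lifting Tob Tmap n lift0"
  shows "\<forall>X As. length As = n \<longrightarrow> (\<forall>A\<in>set As. A \<subseteq> X) \<longrightarrow> lift0 X As \<subseteq> Tob X"
  by (rule conjunct1[OF assms[unfolded pred_lifting_def]])

lemma pl2: assumes "pred_lifting Tob Tmap n lift0"
  shows "\<forall>X Y f As. f \<in> X \<rightarrow> Y \<longrightarrow> length As = n \<longrightarrow> (\<forall>A\<in>set As. A \<subseteq> Y) \<longrightarrow>
        lift0 X (map (\<lambda>A. X \<inter> f -` A) As) = {t \<in> Tob X. Tmap X Y f t \<in> lift0 Y As}"
  by (rule conjunct1[OF conjunct2[OF assms[unfolded pred_lifting_def]]])

lemma pl3: assumes "pred_lifting Tob Tmap n lift0"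
  shows "\<forall>X As Bs. length As = n \<longrightarrow> length Bs = n \<longrightarrow> (\<forall>B\<in>set Bs. B \<subseteq> X) \<longrightarrow>
        (\<forall>i<n. As ! i \<subseteq> Bs ! i) \<longrightarrow> lift0 X As \<subseteq> lift0 X Bs"
  by (rule conjunct1[OF conjunct2[OF conjunct2[OF assms[unfolded pred_lifting_def]]]])

lemma pl4: assumes "pred_lifting Tob Tmap n lift0"
  shows "\<forall>X xs. length xs = n \<longrightarrow> set xs \<subseteq> X \<longrightarrow> card (lift0 X (map (\<lambda>x. {x}) xs)) = 1"
  by (rule conjunct2[OF conjunct2[OF conjunct2[OF assms[unfolded pred_lifting_def]]]])

lemma eps_char:
  assumes pl: "\<forall>L. pred_lifting Tob Tmap (ar L) (lift L)"
    and \<phi>E: "\<phi> \<in> E0 ar" and u: "unf \<phi> (Mod L as)"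
  shows "lift L (E0 ar) (map (\<lambda>\<psi>. {\<psi>}) as) = {eps ar lift \<phi>}"
proof -
  have m: "length as = ar L \<and> set as \<subseteq> E0 ar" using Mod_E0[OF unf_E0[OF u \<phi>E]] .
  have "card (lift L (E0 ar) (map (\<lambda>\<psi>. {\<psi>}) as)) = 1"
    using pl4[OF pl[rule_format, of L], rule_format, of as "E0 ar"] m by blast
  then obtain t where t: "lift L (E0 ar) (map (\<lambda>\<psi>. {\<psi>}) as) = {t}" by (rule card_1_singletonE)
  have "eps ar lift \<phi> = t"
    unfolding eps_def
  proof (rule the_equality)
    show "\<exists>L' as'. unf \<phi> (Mod L' as') \<and> t \<in> lift L' (E0 ar) (map (\<lambda>\<psi>. {\<psi>}) as')"
      using u t by blast
  next
    fix t' assume "\<exists>L' as'. unf \<phi> (Mod L' as') \<and> t' \<in> lift L' (E0 ar) (map (\<lambda>\<psi>. {\<psi>}) as')"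
    then obtain L' as' where h: "unf \<phi> (Mod L' as')" "t' \<in> lift L' (E0 ar) (map (\<lambda>\<psi>. {\<psi>}) as')"
      by blast
    have "Mod L' as' = Mod L as" using unf_det[OF h(1) u] .
    then have "L' = L" "as' = as" by simp_all
    then show "t' = t" using h(2) t by simp
  qed
  then show ?thesis using t by simp
qed

lemma push:
  assumes pl: "pred_lifting Tob Tmap n lift0"
    and cf: "c \<in> X \<rightarrow> Z" and len: "length as = n" and asX: "set as \<subseteq> X"
    and t: "t \<in> lift0 X (map (\<lambda>a. {a}) as)"
  shows "Tmap X Z c t \<in> lift0 Z (map (\<lambda>a. {c a}) as)"
proof -
  define Bs where "Bs = map (\<lambda>A. X \<inter> c -` A) (map (\<lambda>a. {c a}) as)"
  have l1: "length (map (\<lambda>a. {a}) as) = n" "length Bs = n" using len by (simp_all add: Bs_def)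
  have l2: "\<forall>B\<in>set Bs. B \<subseteq> X" unfolding Bs_def by auto
  have l3: "\<forall>i<n. map (\<lambda>a. {a}) as ! i \<subseteq> Bs ! i"
  proof (intro allI impI)
    fix i assume "i < n"
    then have i: "i < length as" using len by simp
    have "as ! i \<in> X" using asX nth_mem[OF i] by blast
    then show "map (\<lambda>a. {a}) as ! i \<subseteq> Bs ! i" using i unfolding Bs_def by simp
  qed
  have "lift0 X (map (\<lambda>a. {a}) as) \<subseteq> lift0 X Bs"
    using pl3[OF pl, rule_format, OF l1 l2[rule_format] l3[rule_format]] .
  then have tB: "t \<in> lift0 X Bs" using t by blast
  have k1: "\<forall>A\<in>set (map (\<lambda>a. {c a}) as). A \<subseteq> Z" using asX cf by auto
  have k2: "length (map (\<lambda>a. {c a}) as) = n" using len by simp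
  have "lift0 X Bs = {t \<in> Tob X. Tmap X Z c t \<in> lift0 Z (map (\<lambda>a. {c a}) as)}"
    unfolding Bs_def by (rule pl2[OF pl, rule_format, OF cf k2 k1[rule_format]])
  then show ?thesis using tB by blast
qed

theorem mainTheorem15:
  fixes Tob :: "('v, 'm) expr set \<Rightarrow> 't set"
    and Tmap :: "('v, 'm) expr set \<Rightarrow> ('v, 'm) expr set \<Rightarrow> (('v, 'm) expr \<Rightarrow> ('v, 'm) expr) \<Rightarrow> 't \<Rightarrow> 't"
    and ar :: "'m \<Rightarrow> nat"
    and lift :: "'m \<Rightarrow> ('v, 'm) expr set \<Rightarrow> ('v, 'm) expr set list \<Rightarrow> 't set"
    and \<phi> \<psi> :: "('v, 'm) expr"
  assumes "set_functor Tob Tmap"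
    and "\<forall>L. pred_lifting Tob Tmap (ar L) (lift L)"
    and "\<phi> \<in> E0 ar" and "\<psi> \<in> E0 ar"
    and "alpha_eq \<phi> \<psi>"
  shows "beh_equiv Tob Tmap (E0 ar) (eps ar lift) \<phi> (E0 ar) (eps ar lift) \<psi>"
proof -
  define E where "E = (E0 ar :: ('v, 'm) expr set)"
  define c where "c = (canon ar :: ('v, 'm) expr \<Rightarrow> ('v, 'm) expr)"
  define Z where "Z = c ` E"
  define \<gamma> where "\<gamma> = (\<lambda>z. Tmap E Z c (eps ar lift z))"
  have pl: "\<forall>L. pred_lifting Tob Tmap (ar L) (lift L)" by fact
  have cf: "c \<in> E \<rightarrow> Z" unfolding Z_def by blast
  have cE: "c x \<in> E" if "x \<in> E" for x
    using R_E0[OF canon_R that[unfolded E_def]] unfolding c_def E_def .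
  have ZE: "Z \<subseteq> E" unfolding Z_def using cE by blast
  have f1: "\<forall>X Y f. f \<in> X \<rightarrow> Y \<longrightarrow> Tmap X Y f \<in> Tob X \<rightarrow> Tob Y"
    by (rule conjunct1[OF assms(1)[unfolded set_functor_def]])
  have Tc: "Tmap E Z c \<in> Tob E \<rightarrow> Tob Z" using f1 cf by blast
  have epsT: "eps ar lift x \<in> Tob E" if xE: "x \<in> E" for x
  proof -
    obtain L as where u: "unf x (Mod L as)" using unf_exists xE unfolding E_def by blast
    have m: "length as = ar L \<and> set as \<subseteq> E0 ar" using Mod_E0[OF unf_E0[OF u]] xE unfolding E_def by blast
    have "lift L E (map (\<lambda>\<psi>. {\<psi>}) as) \<subseteq> Tob E"
      using pl1[OF pl[rule_format, of L], rule_format, of "map (\<lambda>\<psi>. {\<psi>}) as" E] m unfolding E_def by auto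
    moreover have "lift L E (map (\<lambda>\<psi>. {\<psi>}) as) = {eps ar lift x}"
      using eps_char[OF pl _ u] xE unfolding E_def by blast
    ultimately show ?thesis by blast
  qed
  have coal: "coalgebra Tob Z \<gamma>"
    unfolding coalgebra_def \<gamma>_def using Tc epsT ZE by blast
  have morph: "Tmap E Z c (eps ar lift x) = \<gamma> (c x)" if xE: "x \<in> E" for x
  proof -
    obtain L as where u: "unf x (Mod L as)" using unf_exists xE unfolding E_def by blast
    have m: "length as = ar L \<and> set as \<subseteq> E" using Mod_E0[OF unf_E0[OF u]] xE unfolding E_def by blast
    obtain bs where bs: "unf (c x) (Mod L bs)" "list_all2 ((Srel ar)\<^sup>*\<^sup>*) as bs"
      using R_step[OF canon_R u] unfolding c_def by blast
    have mapeq: "map c as = map c bs" using canon_map[OF bs(2)] unfolding c_def .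
    have cxE: "c x \<in> E" using cE xE .
    have mb: "length bs = ar L \<and> set bs \<subseteq> E" using Mod_E0[OF unf_E0[OF bs(1)]] cxE unfolding E_def by blast
    have plL: "pred_lifting Tob Tmap (ar L) (lift L)" using pl by blast
    have e1: "eps ar lift x \<in> lift L E (map (\<lambda>a. {a}) as)"
      using eps_char[OF pl _ u] xE unfolding E_def by blast
    have e2: "eps ar lift (c x) \<in> lift L E (map (\<lambda>a. {a}) bs)"
      using eps_char[OF pl _ bs(1)] cxE unfolding E_def by blast
    have t1: "Tmap E Z c (eps ar lift x) \<in> lift L Z (map (\<lambda>a. {c a}) as)"
      using push[OF plL cf _ _ e1] m by blast
    have t2: "Tmap E Z c (eps ar lift (c x)) \<in> lift L Z (map (\<lambda>a. {c a}) bs)"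
      using push[OF plL cf _ _ e2] mb by blast
    have r1: "map (\<lambda>a. {c a}) as = map (\<lambda>a. {a}) (map c as)" by simp
    have r2: "map (\<lambda>a. {c a}) bs = map (\<lambda>a. {a}) (map c as)" using mapeq by simp
    have "length (map c as) = ar L" "set (map c as) \<subseteq> Z" using m cf by auto
    then have "card (lift L Z (map (\<lambda>x. {x}) (map c as))) = 1"
      by (rule pl4[OF plL, rule_format])
    then obtain t where t: "lift L Z (map (\<lambda>x. {x}) (map c as)) = {t}" by (rule card_1_singletonE)
    have "Tmap E Z c (eps ar lift x) = t" using t1 t r1 by simp
    moreover have "Tmap E Z c (eps ar lift (c x)) = t" using t2 t r2 by simp
    ultimately show ?thesis unfolding \<gamma>_def by simp
  qed
  have hm: "coalg_morphism Tmap E (eps ar lift) Z \<gamma> c"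
    unfolding coalg_morphism_def using cf morph by blast
  have "Srel ar \<phi> \<psi>" using assms(3,4,5) unfolding Srel_def by blast
  then have "c \<phi> = c \<psi>" unfolding c_def by (intro canon_eq) blast
  then show ?thesis unfolding beh_equiv_def using coal hm unfolding E_def by blast
qed

end
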